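(* A Markov category $\mathcal C$ is positive if and only if for every object $X$ the copy morphism $\mathrm{copy}_X$ is an initial dilation of $\mathrm{id}_X$ and the class of deterministic morphisms of $\mathcal C$ coincides with the class of non-creative morphisms of $\mathcal C$.
   Context: A Markov category is a symmetric monoidal category $(\mathcal C,\otimes,I)$ with commutative comonoids $\mathrm{copy}_X\colon X\to X\otimes X$, $\mathrm{del}_X\colon X\to I$ compatible with $\otimes$, with $I$ terminal. $f\colon A\to X$ is deterministic if $\mathrm{copy}_X\circ f=(f\otimes f)\circ\mathrm{copy}_A$. $\mathcal C$ is positive if for all $f\colon X\to Y$, $g\colon Y\to Z$ with $g\circ f$ deterministic, $(\mathrm{id}_Y\otimes g)\circ\mathrm{copy}_Y\circ f=(f\otimes (g\circ f))\circ\mathrm{copy}_X$. A dilation of $p\colon A\to X$ is $\pi\colon A\to X\otimes E$ with $(\mathrm{id}_X\otimes\mathrm{del}_E)\circ\pi=p$. For a dilation $\pi\colon A\to X\otimes E$ and $f_1,f_2\colon E\to E'$, these are $\pi$-dilationally equal if for every dilation $\rho\colon A\to X\otimes E\otimes F$ of $\pi$, $(\mathrm{id}_X\otimes f_1\otimes\mathrm{id}_F)\circ\rho=(\mathrm{id}_X\otimes f_2\otimes\mathrm{id}_F)\circ\rho$. A dilation $\pi\colon A\to X\otimes E$ of $p$ is initial if for every dilation $\pi'\colon A\to X\otimes E'$ of $p$ there is $f\colon E\to E'$ with $(\mathrm{id}_X\otimes f)\circ\pi=\pi'$, unique up to $\pi$-dilational equality. A morphism $p\colon A\to X$ is non-creative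 if every dilation $\pi\colon A\to X\otimes E$ of $p$ equals $(p\otimes\mathrm{id}_E)\circ\iota$ for some dilation $\iota\colon A\to A\otimes E$ of $\mathrm{id}_A$. *)

theory Defs
  imports Main
begin

text \<open>A (possibly non-strict) symmetric monoidal category with chosen comonoids,
  given by its data. Composition is written  mc_comp C g f  for g after f.\<close>

record ('o, 'm) mcat =
  mc_Ob :: "'o set"
  mc_Ar :: "'m set"
  mc_src :: "'m \<Rightarrow> 'o"
  mc_tgt :: "'m \<Rightarrow> 'o"
  mc_comp :: "'m \<Rightarrow> 'm \<Rightarrow> 'm"
  mc_id :: "'o \<Rightarrow> 'm"
  mc_otens :: "'o \<Rightarrow> 'o \<Rightarrow> 'o"
  mc_mtens :: "'m \<Rightarrow> 'm \<Rightarrow> 'm"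
  mc_unit :: "'o"
  mc_alpha :: "'o \<Rightarrow> 'o \<Rightarrow> 'o \<Rightarrow> 'm"
  mc_alpha_inv :: "'o \<Rightarrow> 'o \<Rightarrow> 'o \<Rightarrow> 'm"
  mc_lam :: "'o \<Rightarrow> 'm"
  mc_rho :: "'o \<Rightarrow> 'm"
  mc_sigma :: "'o \<Rightarrow> 'o \<Rightarrow> 'm"
  mc_copy :: "'o \<Rightarrow> 'm"
  mc_del :: "'o \<Rightarrow> 'm"

definition mhom :: "('o, 'm) mcat \<Rightarrow> 'o \<Rightarrow> 'o \<Rightarrow> 'm set" where
  "mhom C X Y = {f \<in> mc_Ar C. mc_src C f = X \<and> mc_tgt C f = Y}"

definition is_category :: "('o, 'm) mcat \<Rightarrow> bool" where
  "is_category C \<longleftrightarrow>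
     (\<forall>f\<in>mc_Ar C. mc_src C f \<in> mc_Ob C \<and> mc_tgt C f \<in> mc_Ob C) \<and>
     (\<forall>X\<in>mc_Ob C. mc_id C X \<in> mhom C X X) \<and>
     (\<forall>f\<in>mc_Ar C. \<forall>g\<in>mc_Ar C. mc_tgt C f = mc_src C g \<longrightarrow>
         mc_comp C g f \<in> mhom C (mc_src C f) (mc_tgt C g)) \<and>
     (\<forall>f\<in>mc_Ar C. mc_comp C (mc_id C (mc_tgt C f)) f = f \<and>
                   mc_comp C f (mc_id C (mc_src C f)) = f) \<and>
     (\<forall>f\<in>mc_Ar C. \<forall>g\<in>mc_Ar C. \<forall>h\<in>mc_Ar C.
         mc_tgt C f = mc_src C g \<and> mc_tgt C g = mc_src C h \<longrightarrow>
         mc_comp C h (mc_comp C g f) = mc_comp C (mc_comp C h g) f)"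

definition is_iso :: "('o, 'm) mcat \<Rightarrow> 'm \<Rightarrow> bool" where
  "is_iso C f \<longleftrightarrow> f \<in> mc_Ar C \<and>
     (\<exists>g \<in> mhom C (mc_tgt C f) (mc_src C f).
        mc_comp C g f = mc_id C (mc_src C f) \<and> mc_comp C f g = mc_id C (mc_tgt C f))"

definition is_symmetric_monoidal :: "('o, 'm) mcat \<Rightarrow> bool" where
  "is_symmetric_monoidal C \<longleftrightarrow> is_category C \<and>
   (let Ob = mc_Ob C; Ar = mc_Ar C; s = mc_src C; t = mc_tgt C; c = mc_comp C;
        i = mc_id C; T = mc_otens C; M = mc_mtens C; I = mc_unit C;
        a = mc_alpha C; ai = mc_alpha_inv C; l = mc_lam C; r = mc_rho C; sg = mc_sigma C in
     I \<in> Ob \<and>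
     (\<forall>X\<in>Ob. \<forall>Y\<in>Ob. T X Y \<in> Ob) \<and>
     (\<forall>f\<in>Ar. \<forall>g\<in>Ar. M f g \<in> mhom C (T (s f) (s g)) (T (t f) (t g))) \<and>
     (\<forall>X\<in>Ob. \<forall>Y\<in>Ob. M (i X) (i Y) = i (T X Y)) \<and>
     (\<forall>f\<in>Ar. \<forall>g\<in>Ar. \<forall>f'\<in>Ar. \<forall>g'\<in>Ar. t f = s g \<and> t f' = s g' \<longrightarrow>
         M (c g f) (c g' f') = c (M g g') (M f f')) \<and>
     (\<forall>X\<in>Ob. \<forall>Y\<in>Ob. \<forall>Z\<in>Ob.
         a X Y Z \<in> mhom C (T (T X Y) Z) (T X (T Y Z)) \<and>
         ai X Y Z \<in> mhom C (T X (T Y Z)) (T (T X Y) Z) \<and>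
         c (ai X Y Z) (a X Y Z) = i (T (T X Y) Z) \<and>
         c (a X Y Z) (ai X Y Z) = i (T X (T Y Z))) \<and>
     (\<forall>f\<in>Ar. \<forall>g\<in>Ar. \<forall>h\<in>Ar.
         c (a (t f) (t g) (t h)) (M (M f g) h) = c (M f (M g h)) (a (s f) (s g) (s h))) \<and>
     (\<forall>X\<in>Ob. l X \<in> mhom C (T I X) X \<and> is_iso C (l X) \<and>
              r X \<in> mhom C (T X I) X \<and> is_iso C (r X)) \<and>
     (\<forall>f\<in>Ar. c (l (t f)) (M (i I) f) = c f (l (s f)) \<and>
              c (r (t f)) (M f (i I)) = c f (r (s f))) \<and>
     (\<forall>W\<in>Ob. \<forall>X\<in>Ob. \<forall>Y\<in>Ob. \<forall>Z\<in>Ob.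
         c (a W X (T Y Z)) (a (T W X) Y Z) =
         c (M (i W) (a X Y Z)) (c (a W (T X Y) Z) (M (a W X Y) (i Z)))) \<and>
     (\<forall>X\<in>Ob. \<forall>Y\<in>Ob. c (M (i X) (l Y)) (a X I Y) = M (r X) (i Y)) \<and>
     (\<forall>X\<in>Ob. \<forall>Y\<in>Ob. sg X Y \<in> mhom C (T X Y) (T Y X) \<and>
         c (sg Y X) (sg X Y) = i (T X Y)) \<and>
     (\<forall>f\<in>Ar. \<forall>g\<in>Ar. c (sg (t f) (t g)) (M f g) = c (M g f) (sg (s f) (s g))) \<and>
     (\<forall>X\<in>Ob. \<forall>Y\<in>Ob. \<forall>Z\<in>Ob.
         c (a Y Z X) (c (sg X (T Y Z)) (a X Y Z)) =
         c (M (i Y) (sg X Z)) (c (a Y X Z) (M (sg X Y) (i Z)))))"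

definition is_markov_category :: "('o, 'm) mcat \<Rightarrow> bool" where
  "is_markov_category C \<longleftrightarrow> is_symmetric_monoidal C \<and>
   (let Ob = mc_Ob C; c = mc_comp C;
        i = mc_id C; T = mc_otens C; M = mc_mtens C; I = mc_unit C;
        a = mc_alpha C; ai = mc_alpha_inv C; l = mc_lam C; r = mc_rho C; sg = mc_sigma C;
        cp = mc_copy C; d = mc_del C in
     (\<forall>X\<in>Ob. cp X \<in> mhom C X (T X X) \<and> d X \<in> mhom C X I) \<and>
     (\<forall>X\<in>Ob. c (l X) (c (M (d X) (i X)) (cp X)) = i X \<and>
              c (r X) (c (M (i X) (d X)) (cp X)) = i X) \<and>
     (\<forall>X\<in>Ob. c (a X X X) (c (M (cp X) (i X)) (cp X)) = c (M (i X) (cp X)) (cp X)) \<and>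
     (\<forall>X\<in>Ob. c (sg X X) (cp X) = cp X) \<and>
     (\<forall>X\<in>Ob. \<forall>Y\<in>Ob.
        cp (T X Y) =
          c (ai X Y (T X Y))
           (c (M (i X) (a Y X Y))
             (c (M (i X) (M (sg X Y) (i Y)))
               (c (M (i X) (ai X Y Y))
                 (c (a X X (T Y Y)) (M (cp X) (cp Y))))))) \<and>
     (\<forall>X\<in>Ob. \<forall>Y\<in>Ob. d (T X Y) = c (l I) (M (d X) (d Y))) \<and>
     c (l I) (cp I) = i I \<and> c (cp I) (l I) = i (T I I) \<and> d I = i I \<and>
     (\<forall>X\<in>Ob. \<forall>f\<in>mhom C X I. f = d X))"

definition deterministic :: "('o, 'm) mcat \<Rightarrow> 'm \<Rightarrow> bool" where
  "deterministic C f \<longleftrightarrow>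
     mc_comp C (mc_copy C (mc_tgt C f)) f =
     mc_comp C (mc_mtens C f f) (mc_copy C (mc_src C f))"

definition positive :: "('o, 'm) mcat \<Rightarrow> bool" where
  "positive C \<longleftrightarrow>
     (\<forall>f\<in>mc_Ar C. \<forall>g\<in>mc_Ar C. mc_tgt C f = mc_src C g \<longrightarrow>
        deterministic C (mc_comp C g f) \<longrightarrow>
        mc_comp C (mc_mtens C (mc_id C (mc_tgt C f)) g)
                  (mc_comp C (mc_copy C (mc_tgt C f)) f) =
        mc_comp C (mc_mtens C f (mc_comp C g f)) (mc_copy C (mc_src C f)))"

definition dilation :: "('o, 'm) mcat \<Rightarrow> 'm \<Rightarrow> 'o \<Rightarrow> 'm \<Rightarrow> bool" where
  "dilation C p E pi \<longleftrightarrow> p \<in> mc_Ar C \<and> E \<in> mc_Ob C \<and>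
     pi \<in> mhom C (mc_src C p) (mc_otens C (mc_tgt C p) E) \<and>
     mc_comp C (mc_rho C (mc_tgt C p))
       (mc_comp C (mc_mtens C (mc_id C (mc_tgt C p)) (mc_del C E)) pi) = p"

text \<open>\<open>f1, f2 : E \<rightarrow> E'\<close> are \<open>pi\<close>-dilationally equal, for \<open>pi : A \<rightarrow> X \<otimes> E\<close>;
  dilations of \<open>pi\<close> are \<open>rho : A \<rightarrow> (X \<otimes> E) \<otimes> F\<close>.\<close>
definition dil_equal :: "('o, 'm) mcat \<Rightarrow> 'o \<Rightarrow> 'o \<Rightarrow> 'm \<Rightarrow> 'm \<Rightarrow> 'm \<Rightarrow> bool" where
  "dil_equal C X E pi f1 f2 \<longleftrightarrow>
     (\<forall>F rh. dilation C pi F rh \<longrightarrow>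
        mc_comp C (mc_mtens C (mc_mtens C (mc_id C X) f1) (mc_id C F)) rh =
        mc_comp C (mc_mtens C (mc_mtens C (mc_id C X) f2) (mc_id C F)) rh)"

definition initial_dilation :: "('o, 'm) mcat \<Rightarrow> 'm \<Rightarrow> 'o \<Rightarrow> 'm \<Rightarrow> bool" where
  "initial_dilation C p E pi \<longleftrightarrow> dilation C p E pi \<and>
     (\<forall>E' pi'. dilation C p E' pi' \<longrightarrow>
        (\<exists>f \<in> mhom C E E'.
           mc_comp C (mc_mtens C (mc_id C (mc_tgt C p)) f) pi = pi') \<and>
        (\<forall>f1 \<in> mhom C E E'. \<forall>f2 \<in> mhom C E E'.
           mc_comp C (mc_mtens C (mc_id C (mc_tgt C p)) f1) pi = pi' \<and>
           mc_comp C (mc_mtens C (mc_id C (mc_tgt C p)) f2) pi = pi' \<longrightarrow>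
           dil_equal C (mc_tgt C p) E pi f1 f2))"

definition non_creative :: "('o, 'm) mcat \<Rightarrow> 'm \<Rightarrow> bool" where
  "non_creative C p \<longleftrightarrow>
     (\<forall>E pi. dilation C p E pi \<longrightarrow>
        (\<exists>io. dilation C (mc_id C (mc_src C p)) E io \<and>
              pi = mc_comp C (mc_mtens C p (mc_id C E)) io))"

end

theory Submission
  imports Defs
begin


locale MC =
  fixes C :: "('o, 'm) mcat"
  assumes mk: "is_markov_category C"
begin

abbreviation Ob where "Ob \<equiv> mc_Ob C"
abbreviation Ar where "Ar \<equiv> mc_Ar C"
abbreviation s where "s \<equiv> mc_src C"
abbreviation t where "t \<equiv> mc_tgt C"
abbreviation cmp (infixr "\<cdot>" 55) where "g \<cdot> f \<equiv> mc_comp C g f"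
abbreviation tn (infix "\<otimes>" 70) where "f \<otimes> g \<equiv> mc_mtens C f g"
abbreviation T where "T \<equiv> mc_otens C"
abbreviation I where "I \<equiv> mc_unit C"
abbreviation i where "i \<equiv> mc_id C"
abbreviation a where "a \<equiv> mc_alpha C"
abbreviation ai where "ai \<equiv> mc_alpha_inv C"
abbreviation l where "l \<equiv> mc_lam C"
abbreviation r where "r \<equiv> mc_rho C"
abbreviation sg where "sg \<equiv> mc_sigma C"
abbreviation cp where "cp \<equiv> mc_copy C"
abbreviation d where "d \<equiv> mc_del C"

lemma smc0: "is_symmetric_monoidal C" using mk unfolding is_markov_category_def by (rule conjunct1)
lemma cat: "is_category C" using smc0 unfolding is_symmetric_monoidal_def by (rule conjunct1)
lemmas smc' = smc0[unfolded is_symmetric_monoidal_def Let_def, THEN conjunct2]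
lemmas mkv' = mk[unfolded is_markov_category_def Let_def, THEN conjunct2]
lemmas catd = cat[unfolded is_category_def mhom_def]

lemma ar_ob[simp]: "f \<in> Ar \<Longrightarrow> s f \<in> Ob" "f \<in> Ar \<Longrightarrow> t f \<in> Ob" using catd[THEN conjunct1] by auto
lemma id_ar[simp]: "X \<in> Ob \<Longrightarrow> i X \<in> Ar" "X \<in> Ob \<Longrightarrow> s (i X) = X" "X \<in> Ob \<Longrightarrow> t (i X) = X"
  using catd[THEN conjunct2, THEN conjunct1] by auto
lemma comp_ar[simp]: "f \<in> Ar \<Longrightarrow> g \<in> Ar \<Longrightarrow> t f = s g \<Longrightarrow> g \<cdot> f \<in> Ar"
  "f \<in> Ar \<Longrightarrow> g \<in> Ar \<Longrightarrow> t f = s g \<Longrightarrow> s (g \<cdot> f) = s f"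
  "f \<in> Ar \<Longrightarrow> g \<in> Ar \<Longrightarrow> t f = s g \<Longrightarrow> t (g \<cdot> f) = t g"
  using catd[THEN conjunct2, THEN conjunct2, THEN conjunct1] by auto
lemma id_l[simp]: "f \<in> Ar \<Longrightarrow> t f = X \<Longrightarrow> i X \<cdot> f = f"
  and id_r[simp]: "f \<in> Ar \<Longrightarrow> s f = X \<Longrightarrow> f \<cdot> i X = f"
  using catd[THEN conjunct2, THEN conjunct2, THEN conjunct2, THEN conjunct1] by auto
lemma assoc[simp]: "f \<in> Ar \<Longrightarrow> g \<in> Ar \<Longrightarrow> h \<in> Ar \<Longrightarrow> t f = s g \<Longrightarrow> t g = s h \<Longrightarrow>
   (h \<cdot> g) \<cdot> f = h \<cdot> (g \<cdot> f)"
proof -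
  assume A: "f \<in> Ar" "g \<in> Ar" "h \<in> Ar" "t f = s g" "t g = s h"
  have "h \<cdot> (g \<cdot> f) = (h \<cdot> g) \<cdot> f"
    by (rule catd[THEN conjunct2, THEN conjunct2, THEN conjunct2, THEN conjunct2, rule_format]) (use A in auto)
  then show ?thesis by (rule sym)
qed

lemma I_ob[simp]: "I \<in> Ob" using smc'[THEN conjunct1] by auto
lemma T_ob[simp]: "X \<in> Ob \<Longrightarrow> Y \<in> Ob \<Longrightarrow> T X Y \<in> Ob" using smc'[THEN conjunct2, THEN conjunct1] by auto
lemma tn_ar[simp]: "f \<in> Ar \<Longrightarrow> g \<in> Ar \<Longrightarrow> f \<otimes> g \<in> Ar"
  "f \<in> Ar \<Longrightarrow> g \<in> Ar \<Longrightarrow> s (f \<otimes> g) = T (s f) (s g)"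
  "f \<in> Ar \<Longrightarrow> g \<in> Ar \<Longrightarrow> t (f \<otimes> g) = T (t f) (t g)"
  using smc'[THEN conjunct2, THEN conjunct2, THEN conjunct1] unfolding mhom_def by auto
lemma tn_id[simp]: "X \<in> Ob \<Longrightarrow> Y \<in> Ob \<Longrightarrow> i X \<otimes> i Y = i (T X Y)" using smc'[THEN conjunct2, THEN conjunct2, THEN conjunct2, THEN conjunct1] by auto
lemma interchange: "f \<in> Ar \<Longrightarrow> g \<in> Ar \<Longrightarrow> f' \<in> Ar \<Longrightarrow> g' \<in> Ar \<Longrightarrow> t f = s g \<Longrightarrow> t f' = s g' \<Longrightarrow>
   (g \<cdot> f) \<otimes> (g' \<cdot> f') = (g \<otimes> g') \<cdot> (f \<otimes> f')"
  using smc'[THEN conjunct2, THEN conjunct2, THEN conjunct2, THEN conjunct2, THEN conjunct1] by auto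

lemma a_ar[simp]: "X \<in> Ob \<Longrightarrow> Y \<in> Ob \<Longrightarrow> Z \<in> Ob \<Longrightarrow> a X Y Z \<in> Ar"
  "X \<in> Ob \<Longrightarrow> Y \<in> Ob \<Longrightarrow> Z \<in> Ob \<Longrightarrow> s (a X Y Z) = T (T X Y) Z"
  "X \<in> Ob \<Longrightarrow> Y \<in> Ob \<Longrightarrow> Z \<in> Ob \<Longrightarrow> t (a X Y Z) = T X (T Y Z)"
  "X \<in> Ob \<Longrightarrow> Y \<in> Ob \<Longrightarrow> Z \<in> Ob \<Longrightarrow> ai X Y Z \<in> Ar"
  "X \<in> Ob \<Longrightarrow> Y \<in> Ob \<Longrightarrow> Z \<in> Ob \<Longrightarrow> s (ai X Y Z) = T X (T Y Z)"
  "X \<in> Ob \<Longrightarrow> Y \<in> Ob \<Longrightarrow> Z \<in> Ob \<Longrightarrow> t (ai X Y Z) = T (T X Y) Z"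
  using smc'[THEN conjunct2, THEN conjunct2, THEN conjunct2, THEN conjunct2, THEN conjunct2, THEN conjunct1] unfolding mhom_def by auto
lemma a_inv[simp]: "X \<in> Ob \<Longrightarrow> Y \<in> Ob \<Longrightarrow> Z \<in> Ob \<Longrightarrow> ai X Y Z \<cdot> a X Y Z = i (T (T X Y) Z)"
  "X \<in> Ob \<Longrightarrow> Y \<in> Ob \<Longrightarrow> Z \<in> Ob \<Longrightarrow> a X Y Z \<cdot> ai X Y Z = i (T X (T Y Z))"
  using smc'[THEN conjunct2, THEN conjunct2, THEN conjunct2, THEN conjunct2, THEN conjunct2, THEN conjunct1] by auto
lemma a_nat: "f \<in> Ar \<Longrightarrow> g \<in> Ar \<Longrightarrow> h \<in> Ar \<Longrightarrow>
  a (t f) (t g) (t h) \<cdot> ((f \<otimes> g) \<otimes> h) = (f \<otimes> (g \<otimes> h)) \<cdot> a (s f) (s g) (s h)"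
  using smc'[THEN conjunct2, THEN conjunct2, THEN conjunct2, THEN conjunct2, THEN conjunct2, THEN conjunct2, THEN conjunct1] by auto
lemma l_ar[simp]: "X \<in> Ob \<Longrightarrow> l X \<in> Ar" "X \<in> Ob \<Longrightarrow> s (l X) = T I X" "X \<in> Ob \<Longrightarrow> t (l X) = X"
  "X \<in> Ob \<Longrightarrow> r X \<in> Ar" "X \<in> Ob \<Longrightarrow> s (r X) = T X I" "X \<in> Ob \<Longrightarrow> t (r X) = X"
  using smc'[THEN conjunct2, THEN conjunct2, THEN conjunct2, THEN conjunct2, THEN conjunct2, THEN conjunct2, THEN conjunct2, THEN conjunct1] unfolding mhom_def by auto
lemma l_iso: "X \<in> Ob \<Longrightarrow> is_iso C (l X)" "X \<in> Ob \<Longrightarrow> is_iso C (r X)" using smc'[THEN conjunct2, THEN conjunct2, THEN conjunct2, THEN conjunct2, THEN conjunct2, THEN conjunct2, THEN conjunct2, THEN conjunct1] by auto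
lemma l_nat: "f \<in> Ar \<Longrightarrow> l (t f) \<cdot> (i I \<otimes> f) = f \<cdot> l (s f)"
  and r_nat: "f \<in> Ar \<Longrightarrow> r (t f) \<cdot> (f \<otimes> i I) = f \<cdot> r (s f)"
  using smc'[THEN conjunct2, THEN conjunct2, THEN conjunct2, THEN conjunct2, THEN conjunct2, THEN conjunct2, THEN conjunct2, THEN conjunct2, THEN conjunct1] by auto
lemma pentagon: "W \<in> Ob \<Longrightarrow> X \<in> Ob \<Longrightarrow> Y \<in> Ob \<Longrightarrow> Z \<in> Ob \<Longrightarrow>
   a W X (T Y Z) \<cdot> a (T W X) Y Z = (i W \<otimes> a X Y Z) \<cdot> (a W (T X Y) Z \<cdot> (a W X Y \<otimes> i Z))"
  using smc'[THEN conjunct2, THEN conjunct2, THEN conjunct2, THEN conjunct2, THEN conjunct2, THEN conjunct2, THEN conjunct2, THEN conjunct2, THEN conjunct2, THEN conjunct1] by auto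
lemma triangle: "X \<in> Ob \<Longrightarrow> Y \<in> Ob \<Longrightarrow> (i X \<otimes> l Y) \<cdot> a X I Y = r X \<otimes> i Y"
  using smc'[THEN conjunct2, THEN conjunct2, THEN conjunct2, THEN conjunct2, THEN conjunct2, THEN conjunct2, THEN conjunct2, THEN conjunct2, THEN conjunct2, THEN conjunct2, THEN conjunct1] by auto
lemma sg_ar[simp]: "X \<in> Ob \<Longrightarrow> Y \<in> Ob \<Longrightarrow> sg X Y \<in> Ar" "X \<in> Ob \<Longrightarrow> Y \<in> Ob \<Longrightarrow> s (sg X Y) = T X Y"
  "X \<in> Ob \<Longrightarrow> Y \<in> Ob \<Longrightarrow> t (sg X Y) = T Y X"
  using smc'[THEN conjunct2, THEN conjunct2, THEN conjunct2, THEN conjunct2, THEN conjunct2, THEN conjunct2, THEN conjunct2, THEN conjunct2, THEN conjunct2, THEN conjunct2, THEN conjunct2, THEN conjunct1] unfolding mhom_def by auto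
lemma sg_inv[simp]: "X \<in> Ob \<Longrightarrow> Y \<in> Ob \<Longrightarrow> sg Y X \<cdot> sg X Y = i (T X Y)" using smc'[THEN conjunct2, THEN conjunct2, THEN conjunct2, THEN conjunct2, THEN conjunct2, THEN conjunct2, THEN conjunct2, THEN conjunct2, THEN conjunct2, THEN conjunct2, THEN conjunct2, THEN conjunct1] by auto
lemma sg_nat: "f \<in> Ar \<Longrightarrow> g \<in> Ar \<Longrightarrow> sg (t f) (t g) \<cdot> (f \<otimes> g) = (g \<otimes> f) \<cdot> sg (s f) (s g)"
  using smc'[THEN conjunct2, THEN conjunct2, THEN conjunct2, THEN conjunct2, THEN conjunct2, THEN conjunct2, THEN conjunct2, THEN conjunct2, THEN conjunct2, THEN conjunct2, THEN conjunct2, THEN conjunct2, THEN conjunct1] by auto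

lemma cp_ar[simp]: "X \<in> Ob \<Longrightarrow> cp X \<in> Ar" "X \<in> Ob \<Longrightarrow> s (cp X) = X" "X \<in> Ob \<Longrightarrow> t (cp X) = T X X"
  "X \<in> Ob \<Longrightarrow> d X \<in> Ar" "X \<in> Ob \<Longrightarrow> s (d X) = X" "X \<in> Ob \<Longrightarrow> t (d X) = I"
  using mkv'[THEN conjunct1] unfolding mhom_def by auto
lemma counit: "X \<in> Ob \<Longrightarrow> l X \<cdot> ((d X \<otimes> i X) \<cdot> cp X) = i X"
  "X \<in> Ob \<Longrightarrow> r X \<cdot> ((i X \<otimes> d X) \<cdot> cp X) = i X" using mkv'[THEN conjunct2, THEN conjunct1] by auto
lemma coassoc: "X \<in> Ob \<Longrightarrow> a X X X \<cdot> ((cp X \<otimes> i X) \<cdot> cp X) = (i X \<otimes> cp X) \<cdot> cp X" using mkv'[THEN conjunct2, THEN conjunct2, THEN conjunct1] by auto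
lemma cocomm: "X \<in> Ob \<Longrightarrow> sg X X \<cdot> cp X = cp X" using mkv'[THEN conjunct2, THEN conjunct2, THEN conjunct2, THEN conjunct1] by auto
lemma cp_T: "X \<in> Ob \<Longrightarrow> Y \<in> Ob \<Longrightarrow> cp (T X Y) =
          ai X Y (T X Y) \<cdot> ((i X \<otimes> a Y X Y) \<cdot> ((i X \<otimes> (sg X Y \<otimes> i Y)) \<cdot>
             ((i X \<otimes> ai X Y Y) \<cdot> (a X X (T Y Y) \<cdot> (cp X \<otimes> cp Y)))))"
  using mkv'[THEN conjunct2, THEN conjunct2, THEN conjunct2, THEN conjunct2, THEN conjunct1] by auto
lemma d_T: "X \<in> Ob \<Longrightarrow> Y \<in> Ob \<Longrightarrow> d (T X Y) = l I \<cdot> (d X \<otimes> d Y)" using mkv'[THEN conjunct2, THEN conjunct2, THEN conjunct2, THEN conjunct2, THEN conjunct2, THEN conjunct1] by auto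
lemma terminal: "f \<in> Ar \<Longrightarrow> s f = X \<Longrightarrow> t f = I \<Longrightarrow> f = d X"
  using mkv'[THEN conjunct2, THEN conjunct2, THEN conjunct2, THEN conjunct2, THEN conjunct2, THEN conjunct2, THEN conjunct2, THEN conjunct2, THEN conjunct2] unfolding mhom_def by auto

end


context MC begin

lemma ext: "g \<cdot> f = h \<Longrightarrow> f \<in> Ar \<Longrightarrow> g \<in> Ar \<Longrightarrow> k \<in> Ar \<Longrightarrow>
  t f = s g \<Longrightarrow> t k = s f \<Longrightarrow> g \<cdot> (f \<cdot> k) = h \<cdot> k"
  by (metis assoc)

lemma inv_ext: "g \<cdot> f = i Y \<Longrightarrow> f \<in> Ar \<Longrightarrow> g \<in> Ar \<Longrightarrow> k \<in> Ar \<Longrightarrow> t f = s g \<Longrightarrow> t k = s f \<Longrightarrow> t k = Y \<Longrightarrow>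
   g \<cdot> (f \<cdot> k) = k"
  by (metis assoc id_l)

lemma a_inv_ext[simp]: "X \<in> Ob \<Longrightarrow> Y \<in> Ob \<Longrightarrow> Z \<in> Ob \<Longrightarrow> k \<in> Ar \<Longrightarrow> t k = T (T X Y) Z \<Longrightarrow> ai X Y Z \<cdot> (a X Y Z \<cdot> k) = k"
  "X \<in> Ob \<Longrightarrow> Y \<in> Ob \<Longrightarrow> Z \<in> Ob \<Longrightarrow> k \<in> Ar \<Longrightarrow> t k = T X (T Y Z) \<Longrightarrow> a X Y Z \<cdot> (ai X Y Z \<cdot> k) = k"
  by (rule inv_ext; simp)+

lemma sg_inv_ext[simp]: "X \<in> Ob \<Longrightarrow> Y \<in> Ob \<Longrightarrow> k \<in> Ar \<Longrightarrow> t k = T X Y \<Longrightarrow> sg Y X \<cdot> (sg X Y \<cdot> k) = k"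
  by (rule inv_ext; simp)+

definition li where "li X = (d X \<otimes> i X) \<cdot> cp X"
definition ri where "ri X = (i X \<otimes> d X) \<cdot> cp X"

lemma li_ar[simp]: "X \<in> Ob \<Longrightarrow> li X \<in> Ar" "X \<in> Ob \<Longrightarrow> s (li X) = X" "X \<in> Ob \<Longrightarrow> t (li X) = T I X"
  "X \<in> Ob \<Longrightarrow> ri X \<in> Ar" "X \<in> Ob \<Longrightarrow> s (ri X) = X" "X \<in> Ob \<Longrightarrow> t (ri X) = T X I"
  by (simp_all add: li_def ri_def)

lemma iso_inv: "is_iso C f \<Longrightarrow> g \<in> Ar \<Longrightarrow> s g = t f \<Longrightarrow> t g = s f \<Longrightarrow> f \<cdot> g = i (t f) \<Longrightarrow> g \<cdot> f = i (s f)"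
proof -
  assume A: "is_iso C f" "g \<in> Ar" "s g = t f" "t g = s f" "f \<cdot> g = i (t f)"
  then obtain h where h: "h \<in> Ar" "s h = t f" "t h = s f" "h \<cdot> f = i (s f)" "f \<cdot> h = i (t f)"
    unfolding is_iso_def mhom_def by auto
  have f: "f \<in> Ar" using A unfolding is_iso_def by auto
  have "g = (h \<cdot> f) \<cdot> g" using h A f by simp
  also have "\<dots> = h \<cdot> (f \<cdot> g)" using h A f by (intro assoc) auto
  also have "\<dots> = h" using h A f by simp
  finally show ?thesis using h by simp
qed

lemma l_li[simp]: "X \<in> Ob \<Longrightarrow> l X \<cdot> li X = i X" "X \<in> Ob \<Longrightarrow> r X \<cdot> ri X = i X"
  using counit by (simp_all add: li_def ri_def)
lemma li_l[simp]: "X \<in> Ob \<Longrightarrow> li X \<cdot> l X = i (T I X)" "X \<in> Ob \<Longrightarrow> ri X \<cdot> r X = i (T X I)"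
  using iso_inv[OF l_iso(1), of X "li X"] iso_inv[OF l_iso(2), of X "ri X"] by simp_all
lemma l_li_ext[simp]: "X \<in> Ob \<Longrightarrow> k \<in> Ar \<Longrightarrow> t k = X \<Longrightarrow> l X \<cdot> (li X \<cdot> k) = k"
  "X \<in> Ob \<Longrightarrow> k \<in> Ar \<Longrightarrow> t k = X \<Longrightarrow> r X \<cdot> (ri X \<cdot> k) = k"
  "X \<in> Ob \<Longrightarrow> k \<in> Ar \<Longrightarrow> t k = T I X \<Longrightarrow> li X \<cdot> (l X \<cdot> k) = k"
  "X \<in> Ob \<Longrightarrow> k \<in> Ar \<Longrightarrow> t k = T X I \<Longrightarrow> ri X \<cdot> (r X \<cdot> k) = k"
  by (rule inv_ext; simp)+

lemma faith_l: "f \<in> Ar \<Longrightarrow> g \<in> Ar \<Longrightarrow> s f = s g \<Longrightarrow> t f = t g \<Longrightarrow> i I \<otimes> f = i I \<otimes> g \<Longrightarrow> f = g"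
proof -
  assume A: "f \<in> Ar" "g \<in> Ar" "s f = s g" "t f = t g" "i I \<otimes> f = i I \<otimes> g"
  have "f = (f \<cdot> l (s f)) \<cdot> li (s f)" using A by simp
  also have "\<dots> = (l (t f) \<cdot> (i I \<otimes> f)) \<cdot> li (s f)" using A l_nat[of f] by simp
  also have "\<dots> = (l (t g) \<cdot> (i I \<otimes> g)) \<cdot> li (s g)" using A by simp
  also have "\<dots> = (g \<cdot> l (s g)) \<cdot> li (s g)" using A l_nat[of g] by simp
  also have "\<dots> = g" using A by simp
  finally show ?thesis .
qed

lemma faith_r: "f \<in> Ar \<Longrightarrow> g \<in> Ar \<Longrightarrow> s f = s g \<Longrightarrow> t f = t g \<Longrightarrow> f \<otimes> i I = g \<otimes> i I \<Longrightarrow> f = g"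
proof -
  assume A: "f \<in> Ar" "g \<in> Ar" "s f = s g" "t f = t g" "f \<otimes> i I = g \<otimes> i I"
  have "f = (f \<cdot> r (s f)) \<cdot> ri (s f)" using A by simp
  also have "\<dots> = (r (t f) \<cdot> (f \<otimes> i I)) \<cdot> ri (s f)" using A r_nat[of f] by simp
  also have "\<dots> = (r (t g) \<cdot> (g \<otimes> i I)) \<cdot> ri (s g)" using A by simp
  also have "\<dots> = (g \<cdot> r (s g)) \<cdot> ri (s g)" using A r_nat[of g] by simp
  also have "\<dots> = g" using A by simp
  finally show ?thesis .
qed

lemma merge: "f \<in> Ar \<Longrightarrow> g \<in> Ar \<Longrightarrow> f' \<in> Ar \<Longrightarrow> g' \<in> Ar \<Longrightarrow> t f = s g \<Longrightarrow> t f' = s g' \<Longrightarrow>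
   (g \<otimes> g') \<cdot> (f \<otimes> f') = (g \<cdot> f) \<otimes> (g' \<cdot> f')"
  by (simp add: interchange)
lemma merge_ext: "f \<in> Ar \<Longrightarrow> g \<in> Ar \<Longrightarrow> f' \<in> Ar \<Longrightarrow> g' \<in> Ar \<Longrightarrow> t f = s g \<Longrightarrow> t f' = s g' \<Longrightarrow>
   k \<in> Ar \<Longrightarrow> t k = T (s f) (s f') \<Longrightarrow>
   (g \<otimes> g') \<cdot> ((f \<otimes> f') \<cdot> k) = ((g \<cdot> f) \<otimes> (g' \<cdot> f')) \<cdot> k"
  by (simp add: interchange)

lemma cancel: "u \<cdot> P = v \<cdot> P \<Longrightarrow> P \<cdot> Q = i Y \<Longrightarrow> u \<in> Ar \<Longrightarrow> v \<in> Ar \<Longrightarrow> P \<in> Ar \<Longrightarrow> Q \<in> Ar \<Longrightarrow>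
  t P = s u \<Longrightarrow> t P = s v \<Longrightarrow> t Q = s P \<Longrightarrow> Y = s u \<Longrightarrow> u = v"
  by (metis assoc id_r)

lemma ai_nat: "f \<in> Ar \<Longrightarrow> g \<in> Ar \<Longrightarrow> h \<in> Ar \<Longrightarrow>
  ai (t f) (t g) (t h) \<cdot> (f \<otimes> (g \<otimes> h)) = ((f \<otimes> g) \<otimes> h) \<cdot> ai (s f) (s g) (s h)"
proof -
  assume A: "f \<in> Ar" "g \<in> Ar" "h \<in> Ar"
  have n: "a (t f) (t g) (t h) \<cdot> ((f \<otimes> g) \<otimes> h) = (f \<otimes> (g \<otimes> h)) \<cdot> a (s f) (s g) (s h)"
    using a_nat A by blast
  have "ai (t f) (t g) (t h) \<cdot> (f \<otimes> (g \<otimes> h)) = ai (t f) (t g) (t h) \<cdot> ((f \<otimes> (g \<otimes> h)) \<cdot> (a (s f) (s g) (s h) \<cdot> ai (s f) (s g) (s h)))"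
    using A by simp
  also have "\<dots> = ai (t f) (t g) (t h) \<cdot> (a (t f) (t g) (t h) \<cdot> (((f \<otimes> g) \<otimes> h) \<cdot> ai (s f) (s g) (s h)))"
    using A by (simp add: n ext[OF n])
  also have "\<dots> = ((f \<otimes> g) \<otimes> h) \<cdot> ai (s f) (s g) (s h)" using A by simp
  finally show ?thesis .
qed

lemma K1: "X \<in> Ob \<Longrightarrow> Y \<in> Ob \<Longrightarrow> l (T X Y) \<cdot> a I X Y = l X \<otimes> i Y"
proof -
  assume A: "X \<in> Ob" "Y \<in> Ob"
  define P where "P = a I (T I X) Y \<cdot> (a I I X \<otimes> i Y)"
  define Q where "Q = (ai I I X \<otimes> i Y) \<cdot> ai I (T I X) Y"
  have PQ: "P \<cdot> Q = i (T I (T (T I X) Y))" using A unfolding P_def Q_def by (simp add: merge merge_ext)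
  have Par: "P \<in> Ar" "s P = T (T (T I I) X) Y" "t P = T I (T (T I X) Y)" "Q \<in> Ar" "s Q = t P" "t Q = s P"
    using A unfolding P_def Q_def by simp_all
  have pent: "a I I (T X Y) \<cdot> a (T I I) X Y = (i I \<otimes> a I X Y) \<cdot> (a I (T I X) Y \<cdot> (a I I X \<otimes> i Y))"
    using pentagon A by simp
  have tri1: "(i I \<otimes> l (T X Y)) \<cdot> a I I (T X Y) = r I \<otimes> i (T X Y)" using triangle A by simp
  have tri2: "(i I \<otimes> l X) \<cdot> a I I X = r I \<otimes> i X" using triangle A by simp
  have nat1: "a I X Y \<cdot> ((r I \<otimes> i X) \<otimes> i Y) = (r I \<otimes> i (T X Y)) \<cdot> a (T I I) X Y"
    using a_nat[of "r I" "i X" "i Y"] A by simp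
  have nat2: "a I X Y \<cdot> ((i I \<otimes> l X) \<otimes> i Y) = (i I \<otimes> (l X \<otimes> i Y)) \<cdot> a I (T I X) Y"
    using a_nat[of "i I" "l X" "i Y"] A by simp
  have i1: "i I \<otimes> (l (T X Y) \<cdot> a I X Y) = (i I \<otimes> l (T X Y)) \<cdot> (i I \<otimes> a I X Y)"
    using interchange[of "i I" "i I" "a I X Y" "l (T X Y)"] A by simp
  have "(i I \<otimes> (l (T X Y) \<cdot> a I X Y)) \<cdot> P = (i I \<otimes> l (T X Y)) \<cdot> ((i I \<otimes> a I X Y) \<cdot> (a I (T I X) Y \<cdot> (a I I X \<otimes> i Y)))"
    using A unfolding P_def i1 by simp
  also have "\<dots> = (i I \<otimes> l (T X Y)) \<cdot> (a I I (T X Y) \<cdot> a (T I I) X Y)"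
    using A by (simp add: pent)
  also have "\<dots> = (r I \<otimes> i (T X Y)) \<cdot> a (T I I) X Y"
    using A by (simp add: tri1 ext[OF tri1])
  also have "\<dots> = a I X Y \<cdot> ((r I \<otimes> i X) \<otimes> i Y)"
    using A by (simp add: nat1)
  also have "\<dots> = a I X Y \<cdot> (((i I \<otimes> l X) \<cdot> a I I X) \<otimes> i Y)"
    using A by (simp add: tri2)
  also have "\<dots> = a I X Y \<cdot> (((i I \<otimes> l X) \<otimes> i Y) \<cdot> (a I I X \<otimes> i Y))"
    using A by (simp add: merge)
  also have "\<dots> = (i I \<otimes> (l X \<otimes> i Y)) \<cdot> P"
    using A unfolding P_def by (simp add: nat2 ext[OF nat2])
  finally have E: "i I \<otimes> (l (T X Y) \<cdot> a I X Y) = i I \<otimes> (l X \<otimes> i Y)"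
    by (rule cancel[OF _ PQ]) (use A Par in simp_all)
  show ?thesis by (rule faith_l[OF _ _ _ _ E]) (use A in simp_all)
qed

lemma K2: "X \<in> Ob \<Longrightarrow> Y \<in> Ob \<Longrightarrow> (i X \<otimes> r Y) \<cdot> a X Y I = r (T X Y)"
proof -
  assume A: "X \<in> Ob" "Y \<in> Ob"
  have pent: "a X Y (T I I) \<cdot> a (T X Y) I I = (i X \<otimes> a Y I I) \<cdot> (a X (T Y I) I \<cdot> (a X Y I \<otimes> i I))"
    using pentagon A by simp
  have tri1: "(i Y \<otimes> l I) \<cdot> a Y I I = r Y \<otimes> i I" using triangle A by simp
  have tri2: "(i (T X Y) \<otimes> l I) \<cdot> a (T X Y) I I = r (T X Y) \<otimes> i I" using triangle A by simp
  have nat1: "a X Y I \<cdot> ((i X \<otimes> r Y) \<otimes> i I) = (i X \<otimes> (r Y \<otimes> i I)) \<cdot> a X (T Y I) I"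
    using a_nat[of "i X" "r Y" "i I"] A by simp
  have nat2: "a X Y I \<cdot> (i (T X Y) \<otimes> l I) = (i X \<otimes> (i Y \<otimes> l I)) \<cdot> a X Y (T I I)"
    using a_nat[of "i X" "i Y" "l I"] A by simp
  have i1: "i X \<otimes> ((i Y \<otimes> l I) \<cdot> a Y I I) = (i X \<otimes> (i Y \<otimes> l I)) \<cdot> (i X \<otimes> a Y I I)"
    using interchange[of "i X" "i X" "a Y I I" "i Y \<otimes> l I"] A by simp
  have i2: "((i X \<otimes> r Y) \<cdot> a X Y I) \<otimes> i I = ((i X \<otimes> r Y) \<otimes> i I) \<cdot> (a X Y I \<otimes> i I)"
    using interchange[of "a X Y I" "i X \<otimes> r Y" "i I" "i I"] A by simp
  have "a X Y I \<cdot> (((i X \<otimes> r Y) \<cdot> a X Y I) \<otimes> i I) = a X Y I \<cdot> (((i X \<otimes> r Y) \<otimes> i I) \<cdot> (a X Y I \<otimes> i I))"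
    using A by (simp add: i2)
  also have "\<dots> = (i X \<otimes> (r Y \<otimes> i I)) \<cdot> (a X (T Y I) I \<cdot> (a X Y I \<otimes> i I))"
    using A by (simp add: nat1 ext[OF nat1])
  also have "\<dots> = (i X \<otimes> ((i Y \<otimes> l I) \<cdot> a Y I I)) \<cdot> (a X (T Y I) I \<cdot> (a X Y I \<otimes> i I))"
    using A by (simp add: tri1)
  also have "\<dots> = (i X \<otimes> (i Y \<otimes> l I)) \<cdot> (a X Y (T I I) \<cdot> a (T X Y) I I)"
    using A by (simp add: i1 pent)
  also have "\<dots> = a X Y I \<cdot> (((i X \<otimes> i Y) \<otimes> l I) \<cdot> a (T X Y) I I)"
    using A by (simp add: nat2 ext[OF nat2])
  also have "\<dots> = a X Y I \<cdot> (r (T X Y) \<otimes> i I)"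
    using A by (simp add: tri2)
  finally have "ai X Y I \<cdot> (a X Y I \<cdot> (((i X \<otimes> r Y) \<cdot> a X Y I) \<otimes> i I)) = ai X Y I \<cdot> (a X Y I \<cdot> (r (T X Y) \<otimes> i I))"
    by simp
  then have E: "((i X \<otimes> r Y) \<cdot> a X Y I) \<otimes> i I = r (T X Y) \<otimes> i I" using A by simp
  show ?thesis by (rule faith_r[OF _ _ _ _ E]) (use A in simp_all)
qed

end


context MC begin

lemma K1': "X \<in> Ob \<Longrightarrow> Y \<in> Ob \<Longrightarrow> (l X \<otimes> i Y) \<cdot> ai I X Y = l (T X Y)"
proof -
  assume A: "X \<in> Ob" "Y \<in> Ob"
  have "(l X \<otimes> i Y) \<cdot> ai I X Y = l (T X Y) \<cdot> (a I X Y \<cdot> ai I X Y)" using A K1[OF A, symmetric] by simp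
  also have "\<dots> = l (T X Y)" using A by simp
  finally show ?thesis .
qed

lemma K2': "X \<in> Ob \<Longrightarrow> Y \<in> Ob \<Longrightarrow> r (T X Y) = (i X \<otimes> r Y) \<cdot> a X Y I"
  using K2 by simp

lemma split_r: "f \<in> Ar \<Longrightarrow> g \<in> Ar \<Longrightarrow> t g = s f \<Longrightarrow> X \<in> Ob \<Longrightarrow> i X \<otimes> (f \<cdot> g) = (i X \<otimes> f) \<cdot> (i X \<otimes> g)"
  using interchange[of "i X" "i X" g f] by simp
lemma split_l: "f \<in> Ar \<Longrightarrow> g \<in> Ar \<Longrightarrow> t g = s f \<Longrightarrow> X \<in> Ob \<Longrightarrow> (f \<cdot> g) \<otimes> i X = (f \<otimes> i X) \<cdot> (g \<otimes> i X)"
  using interchange[of g f "i X" "i X"] by simp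

lemma Kin: "X \<in> Ob \<Longrightarrow> E \<in> Ob \<Longrightarrow>
  (i E \<otimes> (r X \<cdot> (i X \<otimes> d E))) \<cdot> (a E X E \<cdot> ((sg X E \<otimes> i E) \<cdot> ai X E E)) =
  sg X E \<cdot> (i X \<otimes> (r E \<cdot> (i E \<otimes> d E)))"
proof -
  assume A: "X \<in> Ob" "E \<in> Ob"
  have n1: "(i E \<otimes> (i X \<otimes> d E)) \<cdot> a E X E = a E X I \<cdot> (i (T E X) \<otimes> d E)"
    using a_nat[of "i E" "i X" "d E"] A by simp
  have k2: "(i E \<otimes> r X) \<cdot> a E X I = r (T E X)" using K2 A by simp
  have m1: "(i (T E X) \<otimes> d E) \<cdot> (sg X E \<otimes> i E) = (sg X E \<otimes> i I) \<cdot> (i (T X E) \<otimes> d E)"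
    using A by (simp add: merge)
  have rn: "r (T E X) \<cdot> (sg X E \<otimes> i I) = sg X E \<cdot> r (T X E)" using r_nat[of "sg X E"] A by simp
  have k2b: "r (T X E) = (i X \<otimes> r E) \<cdot> a X E I" using K2' A by simp
  have n2: "a X E I \<cdot> (i (T X E) \<otimes> d E) = (i X \<otimes> (i E \<otimes> d E)) \<cdot> a X E E"
    using a_nat[of "i X" "i E" "d E"] A by simp
  have "(i E \<otimes> (r X \<cdot> (i X \<otimes> d E))) \<cdot> (a E X E \<cdot> ((sg X E \<otimes> i E) \<cdot> ai X E E))
     = (i E \<otimes> r X) \<cdot> ((i E \<otimes> (i X \<otimes> d E)) \<cdot> (a E X E \<cdot> ((sg X E \<otimes> i E) \<cdot> ai X E E)))"
    using A by (simp add: split_r)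
  also have "\<dots> = (i E \<otimes> r X) \<cdot> (a E X I \<cdot> ((i (T E X) \<otimes> d E) \<cdot> ((sg X E \<otimes> i E) \<cdot> ai X E E)))"
    using A by (simp add: ext[OF n1])
  also have "\<dots> = r (T E X) \<cdot> ((i (T E X) \<otimes> d E) \<cdot> ((sg X E \<otimes> i E) \<cdot> ai X E E))"
    using A by (simp add: ext[OF k2])
  also have "\<dots> = r (T E X) \<cdot> ((sg X E \<otimes> i I) \<cdot> ((i (T X E) \<otimes> d E) \<cdot> ai X E E))"
    using A by (simp add: ext[OF m1])
  also have "\<dots> = sg X E \<cdot> (r (T X E) \<cdot> ((i (T X E) \<otimes> d E) \<cdot> ai X E E))"
    using A by (simp add: ext[OF rn])
  also have "\<dots> = sg X E \<cdot> ((i X \<otimes> r E) \<cdot> (a X E I \<cdot> ((i (T X E) \<otimes> d E) \<cdot> ai X E E)))"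
    using A by (simp add: k2b)
  also have "\<dots> = sg X E \<cdot> ((i X \<otimes> r E) \<cdot> ((i X \<otimes> (i E \<otimes> d E)) \<cdot> (a X E E \<cdot> ai X E E)))"
    using A by (simp add: ext[OF n2])
  also have "\<dots> = sg X E \<cdot> (i X \<otimes> (r E \<cdot> (i E \<otimes> d E)))"
    using A by (simp add: merge)
  finally show ?thesis .
qed

lemma J: "X \<in> Ob \<Longrightarrow> E \<in> Ob \<Longrightarrow>
  (i (T X E) \<otimes> (r X \<cdot> (i X \<otimes> d E))) \<cdot> cp (T X E) = ai X E X \<cdot> ((i X \<otimes> sg X E) \<cdot> (a X X E \<cdot> (cp X \<otimes> i E)))"
proof -
  assume A: "X \<in> Ob" "E \<in> Ob"
  have n1: "(i (T X E) \<otimes> (r X \<cdot> (i X \<otimes> d E))) \<cdot> ai X E (T X E) = ai X E X \<cdot> (i X \<otimes> (i E \<otimes> (r X \<cdot> (i X \<otimes> d E))))"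
    using ai_nat[of "i X" "i E" "r X \<cdot> (i X \<otimes> d E)"] A by simp
  have kin: "(i E \<otimes> (r X \<cdot> (i X \<otimes> d E))) \<cdot> (a E X E \<cdot> ((sg X E \<otimes> i E) \<cdot> ai X E E)) =
    sg X E \<cdot> (i X \<otimes> (r E \<cdot> (i E \<otimes> d E)))" using Kin A by simp
  have n2: "(i X \<otimes> (i X \<otimes> (r E \<cdot> (i E \<otimes> d E)))) \<cdot> a X X (T E E) = a X X E \<cdot> (i (T X X) \<otimes> (r E \<cdot> (i E \<otimes> d E)))"
    using a_nat[of "i X" "i X" "r E \<cdot> (i E \<otimes> d E)"] A by simp
  have "(i (T X E) \<otimes> (r X \<cdot> (i X \<otimes> d E))) \<cdot> cp (T X E) =
     ai X E X \<cdot> ((i X \<otimes> (i E \<otimes> (r X \<cdot> (i X \<otimes> d E)))) \<cdot> ((i X \<otimes> a E X E) \<cdot> ((i X \<otimes> (sg X E \<otimes> i E)) \<cdot>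
             ((i X \<otimes> ai X E E) \<cdot> (a X X (T E E) \<cdot> (cp X \<otimes> cp E))))))"
    using A by (simp add: cp_T ext[OF n1])
  also have "\<dots> = ai X E X \<cdot> ((i X \<otimes> ((i E \<otimes> (r X \<cdot> (i X \<otimes> d E))) \<cdot> (a E X E \<cdot> ((sg X E \<otimes> i E) \<cdot> ai X E E))))
      \<cdot> (a X X (T E E) \<cdot> (cp X \<otimes> cp E)))"
    using A by (simp add: merge_ext)
  also have "\<dots> = ai X E X \<cdot> ((i X \<otimes> (sg X E \<cdot> (i X \<otimes> (r E \<cdot> (i E \<otimes> d E))))) \<cdot> (a X X (T E E) \<cdot> (cp X \<otimes> cp E)))"
    using A by (simp only: kin)
  also have "\<dots> = ai X E X \<cdot> ((i X \<otimes> sg X E) \<cdot> ((i X \<otimes> (i X \<otimes> (r E \<cdot> (i E \<otimes> d E)))) \<cdot> (a X X (T E E) \<cdot> (cp X \<otimes> cp E))))"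
    using A by (simp add: split_r)
  also have "\<dots> = ai X E X \<cdot> ((i X \<otimes> sg X E) \<cdot> (a X X E \<cdot> ((i (T X X) \<otimes> (r E \<cdot> (i E \<otimes> d E))) \<cdot> (cp X \<otimes> cp E))))"
    using A by (simp add: ext[OF n2])
  also have "\<dots> = ai X E X \<cdot> ((i X \<otimes> sg X E) \<cdot> (a X X E \<cdot> (cp X \<otimes> i E)))"
    using A by (simp add: merge counit)
  finally show ?thesis .
qed

lemma Mlem: "X \<in> Ob \<Longrightarrow> E \<in> Ob \<Longrightarrow>
  ((l E \<cdot> (d X \<otimes> i E)) \<otimes> i X) \<cdot> (ai X E X \<cdot> ((i X \<otimes> sg X E) \<cdot> (a X X E \<cdot> (cp X \<otimes> i E)))) = sg X E"
proof -
  assume A: "X \<in> Ob" "E \<in> Ob"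
  have n1: "((d X \<otimes> i E) \<otimes> i X) \<cdot> ai X E X = ai I E X \<cdot> (d X \<otimes> i (T E X))"
    using ai_nat[of "d X" "i E" "i X"] A by simp
  have k1: "(l E \<otimes> i X) \<cdot> ai I E X = l (T E X)" using K1' A by simp
  have m1: "(d X \<otimes> i (T E X)) \<cdot> (i X \<otimes> sg X E) = (i I \<otimes> sg X E) \<cdot> (d X \<otimes> i (T X E))"
    using A by (simp add: merge)
  have ln: "l (T E X) \<cdot> (i I \<otimes> sg X E) = sg X E \<cdot> l (T X E)" using l_nat[of "sg X E"] A by simp
  have k1b: "l (T X E) = (l X \<otimes> i E) \<cdot> ai I X E" using K1' A by simp
  have n2: "ai I X E \<cdot> (d X \<otimes> i (T X E)) = ((d X \<otimes> i X) \<otimes> i E) \<cdot> ai X X E"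
    using ai_nat[of "d X" "i X" "i E"] A by simp
  have "((l E \<cdot> (d X \<otimes> i E)) \<otimes> i X) \<cdot> (ai X E X \<cdot> ((i X \<otimes> sg X E) \<cdot> (a X X E \<cdot> (cp X \<otimes> i E))))
     = (l E \<otimes> i X) \<cdot> (((d X \<otimes> i E) \<otimes> i X) \<cdot> (ai X E X \<cdot> ((i X \<otimes> sg X E) \<cdot> (a X X E \<cdot> (cp X \<otimes> i E)))))"
    using A by (simp add: split_l)
  also have "\<dots> = (l E \<otimes> i X) \<cdot> (ai I E X \<cdot> ((d X \<otimes> i (T E X)) \<cdot> ((i X \<otimes> sg X E) \<cdot> (a X X E \<cdot> (cp X \<otimes> i E)))))"
    using A by (simp add: ext[OF n1])
  also have "\<dots> = l (T E X) \<cdot> ((d X \<otimes> i (T E X)) \<cdot> ((i X \<otimes> sg X E) \<cdot> (a X X E \<cdot> (cp X \<otimes> i E))))"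
    using A by (simp add: ext[OF k1])
  also have "\<dots> = l (T E X) \<cdot> ((i I \<otimes> sg X E) \<cdot> ((d X \<otimes> i (T X E)) \<cdot> (a X X E \<cdot> (cp X \<otimes> i E))))"
    using A by (simp add: ext[OF m1])
  also have "\<dots> = sg X E \<cdot> (l (T X E) \<cdot> ((d X \<otimes> i (T X E)) \<cdot> (a X X E \<cdot> (cp X \<otimes> i E))))"
    using A by (simp add: ext[OF ln])
  also have "\<dots> = sg X E \<cdot> ((l X \<otimes> i E) \<cdot> (ai I X E \<cdot> ((d X \<otimes> i (T X E)) \<cdot> (a X X E \<cdot> (cp X \<otimes> i E)))))"
    using A by (simp add: k1b)
  also have "\<dots> = sg X E \<cdot> ((l X \<otimes> i E) \<cdot> (((d X \<otimes> i X) \<otimes> i E) \<cdot> (ai X X E \<cdot> (a X X E \<cdot> (cp X \<otimes> i E)))))"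
    using A by (simp add: ext[OF n2])
  also have "\<dots> = sg X E"
    using A by (simp add: merge counit)
  finally show ?thesis .
qed

lemma SWAP: "X \<in> Ob \<Longrightarrow> E \<in> Ob \<Longrightarrow>
  ((l E \<cdot> (d X \<otimes> i E)) \<otimes> (r X \<cdot> (i X \<otimes> d E))) \<cdot> cp (T X E) = sg X E"
proof -
  assume A: "X \<in> Ob" "E \<in> Ob"
  have sp: "(l E \<cdot> (d X \<otimes> i E)) \<otimes> (r X \<cdot> (i X \<otimes> d E)) = ((l E \<cdot> (d X \<otimes> i E)) \<otimes> i X) \<cdot> (i (T X E) \<otimes> (r X \<cdot> (i X \<otimes> d E)))"
    using A by (simp add: merge)
  have "((l E \<cdot> (d X \<otimes> i E)) \<otimes> (r X \<cdot> (i X \<otimes> d E))) \<cdot> cp (T X E) =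
     ((l E \<cdot> (d X \<otimes> i E)) \<otimes> i X) \<cdot> ((i (T X E) \<otimes> (r X \<cdot> (i X \<otimes> d E))) \<cdot> cp (T X E))"
    unfolding sp using A by (intro assoc) simp_all
  also have "\<dots> = sg X E" using A by (simp only: J Mlem)
  finally show ?thesis .
qed

lemma SPLIT:
  assumes pos: "positive C" and A: "X \<in> Ob" "E \<in> Ob" "pi \<in> Ar" "t pi = T X E"
    and det: "deterministic C (r X \<cdot> ((i X \<otimes> d E) \<cdot> pi))"
  shows "pi = ((r X \<cdot> ((i X \<otimes> d E) \<cdot> pi)) \<otimes> (l E \<cdot> ((d X \<otimes> i E) \<cdot> pi))) \<cdot> cp (s pi)"
proof -
  let ?p = "r X \<cdot> ((i X \<otimes> d E) \<cdot> pi)"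
  let ?h = "l E \<cdot> ((d X \<otimes> i E) \<cdot> pi)"
  let ?g = "r X \<cdot> (i X \<otimes> d E)"
  have g: "?g \<in> Ar" "s ?g = T X E" using A by simp_all
  have P: "(i (T X E) \<otimes> ?g) \<cdot> (cp (T X E) \<cdot> pi) = (pi \<otimes> (?g \<cdot> pi)) \<cdot> cp (s pi)"
    using pos[unfolded positive_def, rule_format, OF A(3) g(1)] A det by simp
  have "sg X E \<cdot> pi = (((l E \<cdot> (d X \<otimes> i E)) \<otimes> ?g) \<cdot> cp (T X E)) \<cdot> pi" using SWAP A by simp
  also have "\<dots> = ((l E \<cdot> (d X \<otimes> i E)) \<otimes> i X) \<cdot> ((i (T X E) \<otimes> ?g) \<cdot> (cp (T X E) \<cdot> pi))"
    using A by (simp add: merge_ext)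
  also have "\<dots> = ((l E \<cdot> (d X \<otimes> i E)) \<otimes> i X) \<cdot> ((pi \<otimes> (?g \<cdot> pi)) \<cdot> cp (s pi))"
    by (simp only: P)
  also have "\<dots> = (?h \<otimes> ?p) \<cdot> cp (s pi)"
    using A by (simp add: merge_ext)
  finally have E1: "sg X E \<cdot> pi = (?h \<otimes> ?p) \<cdot> cp (s pi)" .
  have sn: "sg E X \<cdot> (?h \<otimes> ?p) = (?p \<otimes> ?h) \<cdot> sg (s pi) (s pi)" using sg_nat[of ?h ?p] A by simp
  have "pi = sg E X \<cdot> (sg X E \<cdot> pi)" using A by simp
  also have "\<dots> = sg E X \<cdot> ((?h \<otimes> ?p) \<cdot> cp (s pi))" by (simp only: E1)
  also have "\<dots> = (?p \<otimes> ?h) \<cdot> (sg (s pi) (s pi) \<cdot> cp (s pi))"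
    using A by (simp add: ext[OF sn])
  also have "\<dots> = (?p \<otimes> ?h) \<cdot> cp (s pi)" using A by (simp add: cocomm)
  finally show ?thesis .
qed

end


context MC begin

lemma d_nat: "f \<in> Ar \<Longrightarrow> d (t f) \<cdot> f = d (s f)"
  by (rule terminal) simp_all

lemma P1: "f \<in> Ar \<Longrightarrow> g \<in> Ar \<Longrightarrow> s f = A \<Longrightarrow> s g = A \<Longrightarrow>
  r (t f) \<cdot> ((i (t f) \<otimes> d (t g)) \<cdot> ((f \<otimes> g) \<cdot> cp A)) = f"
proof -
  assume H: "f \<in> Ar" "g \<in> Ar" "s f = A" "s g = A"
  have A: "A \<in> Ob" using H by (metis ar_ob(1))
  have e1: "(i (t f) \<otimes> d (t g)) \<cdot> (f \<otimes> g) = (f \<otimes> i I) \<cdot> (i A \<otimes> d A)"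
    using H A by (simp add: merge d_nat)
  have e2: "r (t f) \<cdot> (f \<otimes> i I) = f \<cdot> r A" using r_nat[of f] H by simp
  have "r (t f) \<cdot> ((i (t f) \<otimes> d (t g)) \<cdot> ((f \<otimes> g) \<cdot> cp A)) = r (t f) \<cdot> ((f \<otimes> i I) \<cdot> ((i A \<otimes> d A) \<cdot> cp A))"
    using H A by (simp add: ext[OF e1])
  also have "\<dots> = f \<cdot> (r A \<cdot> ((i A \<otimes> d A) \<cdot> cp A))" using H A by (simp add: ext[OF e2])
  also have "\<dots> = f" using H A by (simp add: counit)
  finally show ?thesis .
qed

lemma P2: "f \<in> Ar \<Longrightarrow> g \<in> Ar \<Longrightarrow> s f = A \<Longrightarrow> s g = A \<Longrightarrow>
  l (t g) \<cdot> ((d (t f) \<otimes> i (t g)) \<cdot> ((f \<otimes> g) \<cdot> cp A)) = g"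
proof -
  assume H: "f \<in> Ar" "g \<in> Ar" "s f = A" "s g = A"
  have A: "A \<in> Ob" using H by (metis ar_ob(1))
  have e1: "(d (t f) \<otimes> i (t g)) \<cdot> (f \<otimes> g) = (i I \<otimes> g) \<cdot> (d A \<otimes> i A)"
    using H A by (simp add: merge d_nat)
  have e2: "l (t g) \<cdot> (i I \<otimes> g) = g \<cdot> l A" using l_nat[of g] H by simp
  have "l (t g) \<cdot> ((d (t f) \<otimes> i (t g)) \<cdot> ((f \<otimes> g) \<cdot> cp A)) = l (t g) \<cdot> ((i I \<otimes> g) \<cdot> ((d A \<otimes> i A) \<cdot> cp A))"
    using H A by (simp add: ext[OF e1])
  also have "\<dots> = g \<cdot> (l A \<cdot> ((d A \<otimes> i A) \<cdot> cp A))" using H A by (simp add: ext[OF e2])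
  also have "\<dots> = g" using H A by (simp add: counit)
  finally show ?thesis .
qed

lemma counit_ext: "X \<in> Ob \<Longrightarrow> k \<in> Ar \<Longrightarrow> t k = X \<Longrightarrow> l X \<cdot> ((d X \<otimes> i X) \<cdot> (cp X \<cdot> k)) = k"
  "X \<in> Ob \<Longrightarrow> k \<in> Ar \<Longrightarrow> t k = X \<Longrightarrow> r X \<cdot> ((i X \<otimes> d X) \<cdot> (cp X \<cdot> k)) = k"
proof -
  assume H: "X \<in> Ob" "k \<in> Ar" "t k = X"
  have "l X \<cdot> ((d X \<otimes> i X) \<cdot> (cp X \<cdot> k)) = (l X \<cdot> ((d X \<otimes> i X) \<cdot> cp X)) \<cdot> k" using H by simp
  then show "l X \<cdot> ((d X \<otimes> i X) \<cdot> (cp X \<cdot> k)) = k" using H by (simp add: counit)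
  have "r X \<cdot> ((i X \<otimes> d X) \<cdot> (cp X \<cdot> k)) = (r X \<cdot> ((i X \<otimes> d X) \<cdot> cp X)) \<cdot> k" using H by simp
  then show "r X \<cdot> ((i X \<otimes> d X) \<cdot> (cp X \<cdot> k)) = k" using H by (simp add: counit)
qed

lemma det_id: "X \<in> Ob \<Longrightarrow> deterministic C (i X)"
  unfolding deterministic_def by simp

lemma pos_det_noncr:
  assumes pos: "positive C" and p: "p \<in> Ar" and det: "deterministic C p"
  shows "non_creative C p"
  unfolding non_creative_def
proof (intro allI impI)
  fix E pi assume dil: "dilation C p E pi"
  have H: "pi \<in> Ar" "s pi = s p" "t pi = T (t p) E" "E \<in> Ob" "r (t p) \<cdot> ((i (t p) \<otimes> d E) \<cdot> pi) = p"
    using dil unfolding dilation_def mhom_def by auto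
  let ?h = "l E \<cdot> ((d (t p) \<otimes> i E) \<cdot> pi)"
  have sp: "pi = (p \<otimes> ?h) \<cdot> cp (s p)"
    using SPLIT[OF pos _ H(4) H(1) H(3)] p det H by simp
  let ?io = "(i (s p) \<otimes> ?h) \<cdot> cp (s p)"
  have "dilation C (i (s p)) E ?io"
    unfolding dilation_def mhom_def using H p P1[of "i (s p)" ?h "s p"] by simp
  moreover have "pi = (p \<otimes> i E) \<cdot> ?io"
    using H p sp by (simp add: merge_ext)
  ultimately show "\<exists>io. dilation C (i (s p)) E io \<and> pi = (p \<otimes> i E) \<cdot> io" by blast
qed

lemma pos_noncr_det:
  assumes pos: "positive C" and p: "p \<in> Ar" and nc: "non_creative C p"
  shows "deterministic C p"
proof -
  let ?A = "s p" and ?X = "t p"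
  have ob: "?A \<in> Ob" "?X \<in> Ob" using p by auto
  have "dilation C p ?X (cp ?X \<cdot> p)"
    unfolding dilation_def mhom_def using p ob by (simp add: counit_ext)
  then obtain io where io: "dilation C (i ?A) ?X io" and e: "cp ?X \<cdot> p = (p \<otimes> i ?X) \<cdot> io"
    using nc unfolding non_creative_def by blast
  have H: "io \<in> Ar" "s io = ?A" "t io = T ?A ?X" "r ?A \<cdot> ((i ?A \<otimes> d ?X) \<cdot> io) = i ?A"
    using io ob unfolding dilation_def mhom_def by auto
  let ?h = "l ?X \<cdot> ((d ?A \<otimes> i ?X) \<cdot> io)"
  have sp: "io = (i ?A \<otimes> ?h) \<cdot> cp ?A"
    using SPLIT[OF pos ob(1) ob(2) H(1) H(3)] H det_id[OF ob(1)] by simp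
  have e1: "(p \<otimes> i ?X) \<cdot> io = (p \<otimes> i ?X) \<cdot> ((i ?A \<otimes> ?h) \<cdot> cp ?A)"
    using sp by (rule arg_cong)
  have e2: "cp ?X \<cdot> p = (p \<otimes> ?h) \<cdot> cp ?A"
    unfolding e e1 using H p ob by (simp add: merge_ext)
  have "p = l ?X \<cdot> ((d ?X \<otimes> i ?X) \<cdot> (cp ?X \<cdot> p))" using p ob by (simp add: counit_ext)
  also have "\<dots> = l ?X \<cdot> ((d ?X \<otimes> i ?X) \<cdot> ((p \<otimes> ?h) \<cdot> cp ?A))" by (simp only: e2)
  also have "\<dots> = ?h" using P2[of p ?h ?A] H p ob by simp
  finally have "p = ?h" .
  then show ?thesis unfolding deterministic_def using e2 by simp
qed

lemma M1: "X \<in> Ob \<Longrightarrow> F \<in> Ob \<Longrightarrow> rh \<in> Ar \<Longrightarrow> t rh = T (T X X) F \<Longrightarrow>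
  r (T X X) \<cdot> ((i (T X X) \<otimes> d F) \<cdot> rh) = cp X \<Longrightarrow>
  r X \<cdot> ((i X \<otimes> d (T X F)) \<cdot> (a X X F \<cdot> rh)) = i X"
proof -
  assume H: "X \<in> Ob" "F \<in> Ob" "rh \<in> Ar" "t rh = T (T X X) F" "r (T X X) \<cdot> ((i (T X X) \<otimes> d F) \<cdot> rh) = cp X"
  have n1: "(i X \<otimes> (d X \<otimes> d F)) \<cdot> a X X F = a X I I \<cdot> ((i X \<otimes> d X) \<otimes> d F)"
    using a_nat[of "i X" "d X" "d F"] H by simp
  have tr: "(i X \<otimes> l I) \<cdot> a X I I = r X \<otimes> i I" using triangle H by simp
  have rn1: "r X \<cdot> (r X \<otimes> i I) = r X \<cdot> r (T X I)" using r_nat[of "r X"] H by simp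
  have sp: "(i X \<otimes> d X) \<otimes> d F = ((i X \<otimes> d X) \<otimes> i I) \<cdot> (i (T X X) \<otimes> d F)" using H by (simp add: merge)
  have rn2: "r (T X I) \<cdot> ((i X \<otimes> d X) \<otimes> i I) = (i X \<otimes> d X) \<cdot> r (T X X)"
    using r_nat[of "i X \<otimes> d X"] H by simp
  have "r X \<cdot> ((i X \<otimes> d (T X F)) \<cdot> (a X X F \<cdot> rh)) = r X \<cdot> ((i X \<otimes> l I) \<cdot> ((i X \<otimes> (d X \<otimes> d F)) \<cdot> (a X X F \<cdot> rh)))"
    using H by (simp add: d_T split_r)
  also have "\<dots> = r X \<cdot> ((i X \<otimes> l I) \<cdot> (a X I I \<cdot> (((i X \<otimes> d X) \<otimes> d F) \<cdot> rh)))"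
    using H by (simp add: ext[OF n1])
  also have "\<dots> = r X \<cdot> (r (T X I) \<cdot> (((i X \<otimes> d X) \<otimes> d F) \<cdot> rh))"
    using H by (simp add: ext[OF tr] ext[OF rn1])
  also have "\<dots> = r X \<cdot> ((i X \<otimes> d X) \<cdot> (r (T X X) \<cdot> ((i (T X X) \<otimes> d F) \<cdot> rh)))"
    using H by (simp add: sp ext[OF rn2])
  also have "\<dots> = i X" using H by (simp add: counit)
  finally show ?thesis .
qed

lemma M2: "X \<in> Ob \<Longrightarrow> F \<in> Ob \<Longrightarrow> rh \<in> Ar \<Longrightarrow> t rh = T (T X X) F \<Longrightarrow>
  r (T X X) \<cdot> ((i (T X X) \<otimes> d F) \<cdot> rh) = cp X \<Longrightarrow>
  r X \<cdot> ((i X \<otimes> d F) \<cdot> (l (T X F) \<cdot> ((d X \<otimes> i (T X F)) \<cdot> (a X X F \<cdot> rh)))) = i X"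
proof -
  assume H: "X \<in> Ob" "F \<in> Ob" "rh \<in> Ar" "t rh = T (T X X) F" "r (T X X) \<cdot> ((i (T X X) \<otimes> d F) \<cdot> rh) = cp X"
  have ln: "(i X \<otimes> d F) \<cdot> l (T X F) = l (T X I) \<cdot> (i I \<otimes> (i X \<otimes> d F))" using l_nat[of "i X \<otimes> d F"] H by simp
  have m: "(i I \<otimes> (i X \<otimes> d F)) \<cdot> (d X \<otimes> i (T X F)) = d X \<otimes> (i X \<otimes> d F)" using H by (simp add: merge)
  have n1: "(d X \<otimes> (i X \<otimes> d F)) \<cdot> a X X F = a I X I \<cdot> ((d X \<otimes> i X) \<otimes> d F)"
    using a_nat[of "d X" "i X" "d F"] H by simp
  have k1: "l (T X I) \<cdot> a I X I = l X \<otimes> i I" using K1 H by simp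
  have rn1: "r X \<cdot> (l X \<otimes> i I) = l X \<cdot> r (T I X)" using r_nat[of "l X"] H by simp
  have sp: "(d X \<otimes> i X) \<otimes> d F = ((d X \<otimes> i X) \<otimes> i I) \<cdot> (i (T X X) \<otimes> d F)" using H by (simp add: merge)
  have rn2: "r (T I X) \<cdot> ((d X \<otimes> i X) \<otimes> i I) = (d X \<otimes> i X) \<cdot> r (T X X)"
    using r_nat[of "d X \<otimes> i X"] H by simp
  have "r X \<cdot> ((i X \<otimes> d F) \<cdot> (l (T X F) \<cdot> ((d X \<otimes> i (T X F)) \<cdot> (a X X F \<cdot> rh)))) =
     r X \<cdot> (l (T X I) \<cdot> ((d X \<otimes> (i X \<otimes> d F)) \<cdot> (a X X F \<cdot> rh)))"
    using H by (simp add: ext[OF ln] ext[OF m])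
  also have "\<dots> = r X \<cdot> (l (T X I) \<cdot> (a I X I \<cdot> (((d X \<otimes> i X) \<otimes> d F) \<cdot> rh)))"
    using H by (simp add: ext[OF n1])
  also have "\<dots> = l X \<cdot> (r (T I X) \<cdot> (((d X \<otimes> i X) \<otimes> d F) \<cdot> rh))"
    using H by (simp add: ext[OF k1] ext[OF rn1])
  also have "\<dots> = l X \<cdot> ((d X \<otimes> i X) \<cdot> (r (T X X) \<cdot> ((i (T X X) \<otimes> d F) \<cdot> rh)))"
    using H by (simp add: sp ext[OF rn2])
  also have "\<dots> = i X" using H by (simp add: counit)
  finally show ?thesis .
qed

lemma coassoc': "X \<in> Ob \<Longrightarrow> ai X X X \<cdot> ((i X \<otimes> cp X) \<cdot> cp X) = (cp X \<otimes> i X) \<cdot> cp X"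
proof -
  assume X: "X \<in> Ob"
  have "(cp X \<otimes> i X) \<cdot> cp X = ai X X X \<cdot> (a X X X \<cdot> ((cp X \<otimes> i X) \<cdot> cp X))" using X by simp
  also have "\<dots> = ai X X X \<cdot> ((i X \<otimes> cp X) \<cdot> cp X)" using X by (simp only: coassoc)
  finally show ?thesis by simp
qed

lemma pos_initial:
  assumes pos: "positive C" and X: "X \<in> Ob"
  shows "initial_dilation C (i X) X (cp X)"
  unfolding initial_dilation_def
proof (intro conjI allI impI)
  show "dilation C (i X) X (cp X)" unfolding dilation_def mhom_def using X by (simp add: counit)
  fix E' pi' assume dil: "dilation C (i X) E' pi'"
  have H: "pi' \<in> Ar" "s pi' = X" "t pi' = T X E'" "E' \<in> Ob" "r X \<cdot> ((i X \<otimes> d E') \<cdot> pi') = i X"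
    using dil X unfolding dilation_def mhom_def by auto
  let ?h = "l E' \<cdot> ((d X \<otimes> i E') \<cdot> pi')"
  have sp: "pi' = (i X \<otimes> ?h) \<cdot> cp X"
    using SPLIT[OF pos X H(4) H(1) H(3)] H det_id[OF X] by simp
  show "\<exists>f\<in>mhom C X E'. (i (t (i X)) \<otimes> f) \<cdot> cp X = pi'"
    using sp H X unfolding mhom_def by (intro bexI[of _ ?h]) auto
  show "\<forall>f1\<in>mhom C X E'. \<forall>f2\<in>mhom C X E'.
       (i (t (i X)) \<otimes> f1) \<cdot> cp X = pi' \<and> (i (t (i X)) \<otimes> f2) \<cdot> cp X = pi' \<longrightarrow>
       dil_equal C (t (i X)) X (cp X) f1 f2"
  proof (intro ballI impI)
    fix f1 f2 assume f: "f1 \<in> mhom C X E'" "f2 \<in> mhom C X E'"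
      and e: "(i (t (i X)) \<otimes> f1) \<cdot> cp X = pi' \<and> (i (t (i X)) \<otimes> f2) \<cdot> cp X = pi'"
    have f': "f1 \<in> Ar" "s f1 = X" "t f1 = E'" "f2 \<in> Ar" "s f2 = X" "t f2 = E'" using f unfolding mhom_def by auto
    have e': "(i X \<otimes> f1) \<cdot> cp X = pi'" "(i X \<otimes> f2) \<cdot> cp X = pi'" using e X by auto
    show "dil_equal C (t (i X)) X (cp X) f1 f2"
      unfolding dil_equal_def
    proof (intro allI impI)
      fix F rh assume dr: "dilation C (cp X) F rh"
      have R: "rh \<in> Ar" "s rh = X" "t rh = T (T X X) F" "F \<in> Ob" "r (T X X) \<cdot> ((i (T X X) \<otimes> d F) \<cdot> rh) = cp X"
        using dr X unfolding dilation_def mhom_def by auto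
      let ?rh' = "a X X F \<cdot> rh"
      let ?k = "l (T X F) \<cdot> ((d X \<otimes> i (T X F)) \<cdot> ?rh')"
      have s1: "?rh' = (i X \<otimes> ?k) \<cdot> cp X"
        using SPLIT[OF pos X _ _, of "T X F" ?rh'] R X M1[OF X R(4) R(1) R(3) R(5)] det_id[OF X] by simp
      let ?m = "l F \<cdot> ((d X \<otimes> i F) \<cdot> ?k)"
      have kar: "?k \<in> Ar" "s ?k = X" "t ?k = T X F" using R X by simp_all
      have s2: "?k = (i X \<otimes> ?m) \<cdot> cp X"
        using SPLIT[OF pos X R(4) kar(1) kar(3)] kar M2[OF X R(4) R(1) R(3) R(5)] det_id[OF X] by simp
      have mar: "?m \<in> Ar" "s ?m = X" "t ?m = F" using R X by simp_all
      have "rh = ai X X F \<cdot> ?rh'" using R X by simp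
      also have "\<dots> = ai X X F \<cdot> ((i X \<otimes> ((i X \<otimes> ?m) \<cdot> cp X)) \<cdot> cp X)"
        using s1 s2 by simp
      also have "\<dots> = ai X X F \<cdot> ((i X \<otimes> (i X \<otimes> ?m)) \<cdot> ((i X \<otimes> cp X) \<cdot> cp X))"
        using X mar by (simp add: split_r)
      also have "\<dots> = ((i X \<otimes> i X) \<otimes> ?m) \<cdot> (ai X X X \<cdot> ((i X \<otimes> cp X) \<cdot> cp X))"
      proof -
        have an: "ai X X F \<cdot> (i X \<otimes> (i X \<otimes> ?m)) = (i (T X X) \<otimes> ?m) \<cdot> ai X X X"
          using X mar ai_nat[of "i X" "i X" ?m] by simp
        show ?thesis using X mar R by (simp add: ext[OF an])
      qed
      also have "\<dots> = (cp X \<otimes> ?m) \<cdot> cp X"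
        using X mar by (simp add: coassoc' merge_ext)
      finally have rr: "rh = (cp X \<otimes> ?m) \<cdot> cp X" .
      have "((i (t (i X)) \<otimes> f1) \<otimes> i F) \<cdot> rh = (pi' \<otimes> ?m) \<cdot> cp X"
        using X mar f' R e'(1) by (subst rr) (simp add: merge_ext)
      moreover have "((i (t (i X)) \<otimes> f2) \<otimes> i F) \<cdot> rh = (pi' \<otimes> ?m) \<cdot> cp X"
        using X mar f' R e'(2) by (subst rr) (simp add: merge_ext)
      ultimately show "((i (t (i X)) \<otimes> f1) \<otimes> i F) \<cdot> rh = ((i (t (i X)) \<otimes> f2) \<otimes> i F) \<cdot> rh" by simp
    qed
  qed
qed

lemma conv_pos:
  assumes H1: "\<forall>X\<in>Ob. initial_dilation C (i X) X (cp X)"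
    and H2: "\<forall>p\<in>Ar. deterministic C p \<longleftrightarrow> non_creative C p"
  shows "positive C"
  unfolding positive_def
proof (intro ballI impI)
  fix f g assume f: "f \<in> Ar" and g: "g \<in> Ar" and fg: "t f = s g" and det: "deterministic C (g \<cdot> f)"
  obtain X Y Z where XYZ: "s f = X" "t f = Y" "s g = Y" "t g = Z" using fg by metis
  have ob: "X \<in> Ob" "Y \<in> Ob" "Z \<in> Ob" using f g XYZ by (metis ar_ob)+
  let ?sg = "(g \<otimes> i Y) \<cdot> (cp Y \<cdot> f)"
  have e1: "(i Z \<otimes> d Y) \<cdot> (g \<otimes> i Y) = (g \<otimes> i I) \<cdot> (i Y \<otimes> d Y)" using f g fg XYZ ob by (simp add: merge)
  have e2: "r Z \<cdot> (g \<otimes> i I) = g \<cdot> r Y" using r_nat[of g] g fg XYZ by simp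
  have "r Z \<cdot> ((i Z \<otimes> d Y) \<cdot> ?sg) = g \<cdot> (r Y \<cdot> ((i Y \<otimes> d Y) \<cdot> (cp Y \<cdot> f)))"
    using f g fg XYZ ob by (simp add: ext[OF e1] ext[OF e2])
  also have "\<dots> = g \<cdot> f" using f XYZ ob by (simp add: counit_ext)
  finally have marg: "r Z \<cdot> ((i Z \<otimes> d Y) \<cdot> ?sg) = g \<cdot> f" .
  have "dilation C (g \<cdot> f) Y ?sg" unfolding dilation_def mhom_def using f g fg XYZ ob marg by simp
  moreover have "non_creative C (g \<cdot> f)" using H2 det f g fg XYZ by simp
  ultimately obtain io where io: "dilation C (i X) Y io" and e: "?sg = ((g \<cdot> f) \<otimes> i Y) \<cdot> io"
    unfolding non_creative_def using f g fg XYZ by auto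
  obtain h where h: "h \<in> mhom C X Y" and eh: "(i X \<otimes> h) \<cdot> cp X = io"
    using H1 ob io unfolding initial_dilation_def by fastforce
  have h': "h \<in> Ar" "s h = X" "t h = Y" using h unfolding mhom_def by auto
  have e3: "?sg = ((g \<cdot> f) \<otimes> h) \<cdot> cp X"
    unfolding e eh[symmetric] using f g fg XYZ h' ob by (simp add: merge_ext)
  have dg: "d Z \<cdot> g = d Y" using d_nat[of g] g XYZ by simp
  have e4: "(d Z \<otimes> i Y) \<cdot> (g \<otimes> i Y) = d Y \<otimes> i Y" using f g fg XYZ ob by (simp add: merge dg)
  have "f = l Y \<cdot> ((d Z \<otimes> i Y) \<cdot> ?sg)" using f g fg XYZ ob by (simp add: ext[OF e4] counit_ext)
  also have "\<dots> = l Y \<cdot> ((d Z \<otimes> i Y) \<cdot> (((g \<cdot> f) \<otimes> h) \<cdot> cp X))" by (simp only: e3)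
  also have "\<dots> = h" using P2[of "g \<cdot> f" h X] f g fg XYZ h' ob by simp
  finally have hf: "h = f" by simp
  have sn: "sg Z Y \<cdot> (g \<otimes> i Y) = (i Y \<otimes> g) \<cdot> sg Y Y" using sg_nat[of g "i Y"] g fg XYZ ob by simp
  have sn2: "sg Z Y \<cdot> ((g \<cdot> f) \<otimes> f) = (f \<otimes> (g \<cdot> f)) \<cdot> sg X X" using sg_nat[of "g \<cdot> f" f] f g fg XYZ by simp
  have "(i Y \<otimes> g) \<cdot> (cp Y \<cdot> f) = (i Y \<otimes> g) \<cdot> (sg Y Y \<cdot> (cp Y \<cdot> f))" using f ob g fg XYZ by (simp add: ext[OF cocomm])
  also have "\<dots> = sg Z Y \<cdot> ?sg" using f g fg XYZ ob by (simp add: ext[OF sn])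
  also have "\<dots> = sg Z Y \<cdot> (((g \<cdot> f) \<otimes> f) \<cdot> cp X)" using e3 hf by simp
  also have "\<dots> = (f \<otimes> (g \<cdot> f)) \<cdot> cp X" using f g fg XYZ ob by (simp add: ext[OF sn2] cocomm)
  finally show "(i (t f) \<otimes> g) \<cdot> (cp (t f) \<cdot> f) = (f \<otimes> (g \<cdot> f)) \<cdot> cp (s f)" using XYZ by simp
qed

lemma main: "positive C \<longleftrightarrow>
           (\<forall>X\<in>Ob. initial_dilation C (i X) X (cp X)) \<and>
           (\<forall>p\<in>Ar. deterministic C p \<longleftrightarrow> non_creative C p)"
  using conv_pos pos_initial pos_det_noncr pos_noncr_det by blast

end

theorem corollary4p16:
  fixes C :: "('o, 'm) mcat"
  assumes "is_markov_category C"
  shows "positive C \<longleftrightarrow>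
           (\<forall>X\<in>mc_Ob C. initial_dilation C (mc_id C X) X (mc_copy C X)) \<and>
           (\<forall>p\<in>mc_Ar C. deterministic C p \<longleftrightarrow> non_creative C p)"
proof -
  interpret MC C using assms by (rule MC.intro)
  show ?thesis by (rule main)
qed


end
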